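(* Two weights $\lambda=(\lambda^L,\lambda^R),\mu=(\mu^L,\mu^R)\in\Lambda_{r,s}$ are $\delta$-balanced if and only if $p\big(c(\lambda,1),\dots,c(\lambda,r+s)\big)=p\big(c(\mu,1),\dots,c(\mu,r+s)\big)$ for every $p\in S_{r,s}[x;y]$.
   Context: $r,s\ge0$, $\delta\in\mathbb C$. $\Lambda^t_{r,s}$: pairs of partitions $(\lambda^L,\lambda^R)$ with $|\lambda^L|=r-t$, $|\lambda^R|=s-t$; $\Lambda_{r,s}=\bigsqcup_{t=0}^{\min(r,s)}\Lambda^t_{r,s}$. $[\nu]$ is the Young diagram of $\nu$; the content of the box in row $a$, column $b$ is $b-a$. $\mathrm{cont}(\nu,i)$ is the content of the box containing $i$ in the row-reading standard tableau of shape $\nu$. For $\lambda\in\Lambda^t_{r,s}$: $c(\lambda,i)=\mathrm{cont}(\lambda^L,i)$ ($1\le i\le r-t$), $0$ ($r-t<i\le r+t$), $\mathrm{cont}(\lambda^R,i-r-t)+\delta$ ($r+t<i\le r+s$). $\lambda,\mu$ are $\delta$-balanced if there is a pairing of the boxes of $[\lambda^L]\setminus([\lambda^L]\cap[\mu^L])$ with those of $[\lambda^R]\setminus([\lambda^R]\cap[\mu^R])$, and a pairing of the boxes of $[\mu^L]\setminus([\lambda^L]\cap[\mu^L])$ with those of $[\mu^R]\setminus([\lambda^R]\cap[\mu^R])$, such that the contents in each pair sum to $-\delta$. $S_{r,s}[x;y]$ is the algebra of polynomials in $x_1,\dots,x_r,y_1,\dots,y_s$ symmetric in the $x$'s and separately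 in the $y$'s such that $x_r=-y_1=t$ yields a polynomial independent of $t$; evaluation at $(a_1,\dots,a_{r+s})$ sets $x_i=a_i$, $y_j=a_{r+j}$. *)

theory Defs
  imports Complex_Main "HOL-Combinatorics.Permutations"
begin

definition is_partition :: "nat list \<Rightarrow> bool" where
  "is_partition \<nu> \<longleftrightarrow> sorted_wrt (\<ge>) \<nu> \<and> (\<forall>x\<in>set \<nu>. 0 < x)"

abbreviation psize :: "nat list \<Rightarrow> nat" where
  "psize \<nu> \<equiv> sum_list \<nu>"

text \<open>Young diagram: boxes (row a, column b), 1-based.\<close>
definition young :: "nat list \<Rightarrow> (nat \<times> nat) set" where
  "young \<nu> = {(a, b). 1 \<le> a \<and> a \<le> length \<nu> \<and> 1 \<le> b \<and> b \<le> \<nu> ! (a - 1)}"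

definition content :: "nat \<times> nat \<Rightarrow> int" where
  "content ab = int (snd ab) - int (fst ab)"

text \<open>Boxes listed in row-reading order (rows top to bottom, left to right):
  the box at position i (1-based) contains i in the row-reading standard tableau.\<close>
definition row_reading :: "nat list \<Rightarrow> (nat \<times> nat) list" where
  "row_reading \<nu> = concat (map (\<lambda>a. map (\<lambda>b. (a, b)) [1..<Suc (\<nu> ! (a - 1))]) [1..<Suc (length \<nu>)])"

definition cont :: "nat list \<Rightarrow> nat \<Rightarrow> int" where
  "cont \<nu> i = content (row_reading \<nu> ! (i - 1))"

definition Lambda :: "nat \<Rightarrow> nat \<Rightarrow> (nat list \<times> nat list) set" where
  "Lambda r s = {(L, R). is_partition L \<and> is_partition R \<and>
      (\<exists>t. t \<le> min r s \<and> psize L = r - t \<and> psize R = s - t)}"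

text \<open>The evaluation point (c(lambda,1), ..., c(lambda,r+s)), stored 0-based:
  coordinate j holds c(lambda, j+1).  Coordinates beyond r+s are irrelevant (set to 0).\<close>
definition cvec :: "nat \<Rightarrow> nat \<Rightarrow> complex \<Rightarrow> nat list \<times> nat list \<Rightarrow> nat \<Rightarrow> complex" where
  "cvec r s \<delta> w j =
     (let L = fst w; R = snd w; t = r - psize L in
      if j < r - t then of_int (cont L (j + 1))
      else if j < r + t then 0
      else if j < r + s then of_int (cont R (j + 1 - r - t)) + \<delta>
      else 0)"

definition balanced :: "complex \<Rightarrow> nat list \<times> nat list \<Rightarrow> nat list \<times> nat list \<Rightarrow> bool" where
  "balanced \<delta> lam mu \<longleftrightarrow>
     (\<exists>f. bij_betw f (young (fst lam) - young (fst mu)) (young (snd lam) - young (snd mu)) \<and>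
          (\<forall>x \<in> young (fst lam) - young (fst mu). of_int (content x) + of_int (content (f x)) = - \<delta>)) \<and>
     (\<exists>g. bij_betw g (young (fst mu) - young (fst lam)) (young (snd mu) - young (snd lam)) \<and>
          (\<forall>x \<in> young (fst mu) - young (fst lam). of_int (content x) + of_int (content (g x)) = - \<delta>))"

text \<open>Polynomial functions with complex coefficients in the variables
  a 0, ..., a (n-1).  (Over the infinite field C, polynomials and polynomial
  functions are in bijection.)\<close>
inductive_set polyfun :: "nat \<Rightarrow> ((nat \<Rightarrow> complex) \<Rightarrow> complex) set" for n :: nat where
  pf_const: "(\<lambda>a. c) \<in> polyfun n"
| pf_var: "i < n \<Longrightarrow> (\<lambda>a. a i) \<in> polyfun n"
| pf_add: "p \<in> polyfun n \<Longrightarrow> q \<in> polyfun n \<Longrightarrow> (\<lambda>a. p a + q a) \<in> polyfun n"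
| pf_mult: "p \<in> polyfun n \<Longrightarrow> q \<in> polyfun n \<Longrightarrow> (\<lambda>a. p a * q a) \<in> polyfun n"

text \<open>Variables: x_i is coordinate i-1 (i = 1..r), y_j is coordinate r+j-1 (j = 1..s).\<close>
definition S_rs :: "nat \<Rightarrow> nat \<Rightarrow> ((nat \<Rightarrow> complex) \<Rightarrow> complex) set" where
  "S_rs r s = {p \<in> polyfun (r + s).
      (\<forall>\<sigma> a. \<sigma> permutes {..<r} \<longrightarrow> p (a \<circ> \<sigma>) = p a) \<and>
      (\<forall>\<sigma> a. \<sigma> permutes {r..<r + s} \<longrightarrow> p (a \<circ> \<sigma>) = p a) \<and>
      (0 < r \<and> 0 < s \<longrightarrow> (\<forall>a t u. p (a(r - 1 := t, r := - t)) = p (a(r - 1 := u, r := - u))))}"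

end

theory Submission
  imports Defs "HOL-Library.Multiset"
begin

declare upt_Suc[simp del]



lemma rr_set: "set (row_reading \<nu>) = young \<nu>"
  unfolding row_reading_def young_def
  by (auto simp add: Suc_le_eq image_iff intro!: bexI)

lemma rr_length: "length (row_reading \<nu>) = sum_list \<nu>"
proof -
  have "[1..<Suc (length \<nu>)] = map Suc [0..<length \<nu>]" by (simp add: map_Suc_upt)
  then have "map (\<lambda>a. \<nu> ! (a - 1)) [1..<Suc (length \<nu>)] = \<nu>"
    by (simp add: comp_def map_nth)
  then show ?thesis unfolding row_reading_def
    by (simp add: length_concat comp_def)
qed

lemma rr_distinct: assumes "is_partition \<nu>" shows "distinct (row_reading \<nu>)"
proof -
  have pos: "0 < \<nu> ! (a - 1)" if "a \<in> set [1..<Suc (length \<nu>)]" for a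
    using assms that unfolding is_partition_def by (auto intro!: nth_mem)
  have "removeAll [] (map (\<lambda>a. map (Pair a) [1..<Suc (\<nu> ! (a - 1))]) [1..<Suc (length \<nu>)])
     = map (\<lambda>a. map (Pair a) [1..<Suc (\<nu> ! (a - 1))]) [1..<Suc (length \<nu>)]"
    using pos by (intro removeAll_id) (auto, fastforce)
  moreover have "distinct (map (\<lambda>a. map (Pair a) [1..<Suc (\<nu> ! (a - 1))]) [1..<Suc (length \<nu>)])"
    unfolding distinct_map
  proof
    show "inj_on (\<lambda>a. map (Pair a) [1..<Suc (\<nu> ! (a - 1))]) (set [1..<Suc (length \<nu>)])"
    proof (rule inj_onI)
      fix x y assume x: "x \<in> set [1..<Suc (length \<nu>)]" and "y \<in> set [1..<Suc (length \<nu>)]"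
        and e: "map (Pair x) [1..<Suc (\<nu> ! (x - 1))] = map (Pair y) [1..<Suc (\<nu> ! (y - 1))]"
      have "(x, 1) \<in> set (map (Pair x) [1..<Suc (\<nu> ! (x - 1))])" using pos[OF x] by auto
      then have "(x, 1) \<in> set (map (Pair y) [1..<Suc (\<nu> ! (y - 1))])" using e by metis
      then show "x = y" by auto
    qed
  qed simp
  ultimately show ?thesis unfolding row_reading_def distinct_concat_iff
    by (auto simp: distinct_map inj_on_def)
qed



lemma young_finite: "finite (young \<nu>)"
  using rr_set[of \<nu>] by (metis List.finite_set)

lemma young_down:
  assumes "is_partition \<nu>" "(a', b') \<in> young \<nu>" "1 \<le> a" "a \<le> a'" "1 \<le> b" "b \<le> b'"
  shows "(a, b) \<in> young \<nu>"
proof -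
  have s: "sorted_wrt (\<ge>) \<nu>" using assms(1) unfolding is_partition_def by simp
  have a': "a' \<le> length \<nu>" "b' \<le> \<nu> ! (a' - 1)" using assms(2) unfolding young_def by auto
  have "\<nu> ! (a' - 1) \<le> \<nu> ! (a - 1)"
  proof (cases "a = a'")
    case False
    then show ?thesis using sorted_wrt_nth_less[OF s, of "a - 1" "a' - 1"] assms a' by auto
  qed simp
  then show ?thesis using assms a' unfolding young_def by auto
qed

lemma young_diff_content:
  assumes "is_partition lam" "is_partition mu" "x \<in> young lam - young mu" "y \<in> young mu - young lam"
  shows "content x \<noteq> content y"
proof
  assume e: "content x = content y"
  obtain a b where x: "x = (a, b)" by (cases x)
  obtain a' b' where y: "y = (a', b')" by (cases y)
  have pos: "1 \<le> a" "1 \<le> b" "1 \<le> a'" "1 \<le> b'" using assms(3,4) x y unfolding young_def by auto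
  have e': "int b - int a = int b' - int a'" using e x y unfolding content_def by simp
  show False
  proof (cases "a \<le> a'")
    case True
    then have "b \<le> b'" using e' by linarith
    then have "(a, b) \<in> young mu" using young_down[OF assms(2), of a' b' a b] assms(4) y True pos by auto
    then show False using assms(3) x by auto
  next
    case False
    then have "b' \<le> b" using e' by linarith
    then have "(a', b') \<in> young lam" using young_down[OF assms(1), of a b a' b'] assms(3) x False pos by auto
    then show False using assms(4) y by auto
  qed
qed

lemma mset_cancel_disj:
  fixes A B C D :: "'a multiset"
  assumes "A + B = C + D" "set_mset A \<inter> set_mset C = {}" "set_mset B \<inter> set_mset D = {}"
  shows "A = D \<and> B = C"
proof -
  have "count A x = count D x \<and> count B x = count C x" for x
  proof -
    have "count A x + count B x = count C x + count D x" using assms(1)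
      by (metis count_union)
    moreover have "count A x = 0 \<or> count C x = 0" using assms(2) by (auto simp: disjoint_iff count_eq_zero_iff)
    moreover have "count B x = 0 \<or> count D x = 0" using assms(3) by (auto simp: disjoint_iff count_eq_zero_iff)
    ultimately show ?thesis by auto
  qed
  then show ?thesis by (simp add: multiset_eq_iff)
qed

lemma bij_from_mset:
  assumes "finite S" "finite T" "image_mset g (mset_set S) = image_mset h (mset_set T)"
  shows "\<exists>f. bij_betw f S T \<and> (\<forall>x\<in>S. h (f x) = g x)"
proof -
  have "card S = card T" using arg_cong[OF assms(3), of size] assms by (metis size_image_mset size_mset_set)
  then obtain e where e: "bij_betw e S T" using finite_same_card_bij assms by blast
  have "image_mset h (mset_set T) = image_mset (h \<circ> e) (mset_set S)"
    using e by (metis bij_betw_def image_mset_mset_set multiset.map_comp)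
  then have "image_mset g (mset_set S) = image_mset (h \<circ> e) (mset_set S)" using assms(3) by simp
  then obtain p where p: "p permutes S" "\<forall>x\<in>S. g x = (h \<circ> e) (p x)"
    using image_mset_eq_implies_permutes[OF assms(1)] by blast
  have "bij_betw (e \<circ> p) S T" using permutes_imp_bij[OF p(1)] e by (rule bij_betw_trans)
  then show ?thesis using p(2) by (intro exI[of _ "e \<circ> p"]) auto
qed

lemma mset_from_bij:
  assumes "bij_betw f S T" "\<forall>x\<in>S. h (f x) = g x"
  shows "image_mset h (mset_set T) = image_mset g (mset_set S)"
proof -
  have "mset_set T = image_mset f (mset_set S)"
    using assms(1) by (metis bij_betw_def image_mset_mset_set)
  have "x \<in> S" if "x \<in># mset_set S" for x
    using that by (cases "finite S") auto
  then have "image_mset (h \<circ> f) (mset_set S) = image_mset g (mset_set S)"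
    using assms(2) by (intro image_mset_cong) auto
  then show ?thesis using \<open>mset_set T = _\<close> by (simp add: multiset.map_comp)
qed

definition CLs :: "(nat \<times> nat) set \<Rightarrow> complex multiset" where
  "CLs S = image_mset (\<lambda>x. of_int (content x)) (mset_set S)"
definition NRs :: "complex \<Rightarrow> (nat \<times> nat) set \<Rightarrow> complex multiset" where
  "NRs \<delta> S = image_mset (\<lambda>x. - \<delta> - of_int (content x)) (mset_set S)"

lemma CLs_split: "finite A \<Longrightarrow> CLs A = CLs (A \<inter> B) + CLs (A - B)"
  unfolding CLs_def by (metis Int_Diff_disjoint Int_Diff_Un finite_Diff finite_Int image_mset_union mset_set_Union)
lemma NRs_split: "finite A \<Longrightarrow> NRs d A = NRs d (A \<inter> B) + NRs d (A - B)"
  unfolding NRs_def by (metis Int_Diff_disjoint Int_Diff_Un finite_Diff finite_Int image_mset_union mset_set_Union)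

lemma balanced_iff_mset:
  assumes "is_partition lL" "is_partition lR" "is_partition mL" "is_partition mR"
  shows "balanced \<delta> (lL, lR) (mL, mR) \<longleftrightarrow>
    CLs (young lL) + NRs \<delta> (young mR) = CLs (young mL) + NRs \<delta> (young lR)"
proof -
  let ?g = "\<lambda>x. of_int (content x) :: complex" and ?h = "\<lambda>x. - \<delta> - of_int (content x)"
  have pair_iff: "(\<exists>f. bij_betw f S T \<and> (\<forall>x\<in>S. of_int (content x) + of_int (content (f x)) = - \<delta>))
     \<longleftrightarrow> CLs S = NRs \<delta> T" if fST: "finite S" "finite T" for S T
  proof
    assume "\<exists>f. bij_betw f S T \<and> (\<forall>x\<in>S. of_int (content x) + of_int (content (f x)) = - \<delta>)"
    then obtain f where f: "bij_betw f S T" "\<forall>x\<in>S. of_int (content x) + of_int (content (f x)) = - \<delta>" by blast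
    have "\<forall>x\<in>S. ?h (f x) = ?g x" using f(2) by (auto simp: diff_eq_eq)
    from mset_from_bij[OF f(1) this] show "CLs S = NRs \<delta> T" unfolding CLs_def NRs_def by simp
  next
    assume "CLs S = NRs \<delta> T"
    then obtain f where f: "bij_betw f S T" "\<forall>x\<in>S. ?h (f x) = ?g x"
      using bij_from_mset[OF fST, of ?g ?h] unfolding CLs_def NRs_def by blast
    then have "\<forall>x\<in>S. of_int (content x) + of_int (content (f x)) = - \<delta>" by (auto simp: algebra_simps)
    with f show "\<exists>f. bij_betw f S T \<and> (\<forall>x\<in>S. of_int (content x) + of_int (content (f x)) = - \<delta>)" by blast
  qed
  have fin: "finite (young lL)" "finite (young lR)" "finite (young mL)" "finite (young mR)"
    by (simp_all add: young_finite)
  have "balanced \<delta> (lL, lR) (mL, mR) \<longleftrightarrow>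
     CLs (young lL - young mL) = NRs \<delta> (young lR - young mR) \<and>
     CLs (young mL - young lL) = NRs \<delta> (young mR - young lR)"
    unfolding balanced_def fst_conv snd_conv using fin by (simp add: pair_iff)
  also have "\<dots> \<longleftrightarrow> CLs (young lL) + NRs \<delta> (young mR) = CLs (young mL) + NRs \<delta> (young lR)"
  proof
    assume h: "CLs (young lL - young mL) = NRs \<delta> (young lR - young mR) \<and>
     CLs (young mL - young lL) = NRs \<delta> (young mR - young lR)"
    show "CLs (young lL) + NRs \<delta> (young mR) = CLs (young mL) + NRs \<delta> (young lR)"
      using CLs_split[OF fin(1), where B="young mL"] CLs_split[OF fin(3), where B="young lL"]
        NRs_split[OF fin(2), where B="young mR"] NRs_split[OF fin(4), where B="young lR"] h
      by (simp add: Int_commute ac_simps)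
  next
    assume h: "CLs (young lL) + NRs \<delta> (young mR) = CLs (young mL) + NRs \<delta> (young lR)"
    have h2: "CLs (young lL - young mL) + NRs \<delta> (young mR - young lR) =
        CLs (young mL - young lL) + NRs \<delta> (young lR - young mR)"
      using CLs_split[OF fin(1), where B="young mL"] CLs_split[OF fin(3), where B="young lL"]
        NRs_split[OF fin(2), where B="young mR"] NRs_split[OF fin(4), where B="young lR"] h
      by (simp add: Int_commute ac_simps)
    have d1: "set_mset (CLs (young lL - young mL)) \<inter> set_mset (CLs (young mL - young lL)) = {}"
      unfolding CLs_def using young_diff_content[OF assms(1,3)] fin by auto
    have d2: "set_mset (NRs \<delta> (young mR - young lR)) \<inter> set_mset (NRs \<delta> (young lR - young mR)) = {}"
      unfolding NRs_def using young_diff_content[OF assms(4,2)] fin by auto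
    from mset_cancel_disj[OF h2 d1 d2]
    show "CLs (young lL - young mL) = NRs \<delta> (young lR - young mR) \<and>
     CLs (young mL - young lL) = NRs \<delta> (young mR - young lR)" by simp
  qed
  finally show ?thesis .
qed



definition vec :: "nat \<Rightarrow> nat \<Rightarrow> complex list \<Rightarrow> complex list \<Rightarrow> nat \<Rightarrow> complex" where
  "vec r s xs ys j = (if j < r then xs ! j else if j < r + s then ys ! (j - r) else 0)"

lemma S1:
  assumes p: "p \<in> S_rs r s" and l: "length xs = r" and m: "mset xs' = mset xs"
  shows "p (vec r s xs' ys) = p (vec r s xs ys)"
proof -
  obtain \<pi> where \<pi>: "\<pi> permutes {..<length xs}" "permute_list \<pi> xs = xs'"
    using mset_eq_permutation[OF m] by blast
  have "vec r s xs' ys = vec r s xs ys \<circ> \<pi>"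
  proof
    fix j
    show "vec r s xs' ys j = (vec r s xs ys \<circ> \<pi>) j"
    proof (cases "j < r")
      case True
      then have "\<pi> j < r" using \<pi>(1) l by (metis lessThan_iff permutes_in_image)
      then show ?thesis using True \<pi> l by (auto simp: vec_def permute_list_nth)
    next
      case False
      then have "\<pi> j = j" using \<pi>(1) l by (intro permutes_not_in) auto
      then show ?thesis using False by (simp add: vec_def)
    qed
  qed
  moreover have "p (vec r s xs ys \<circ> \<pi>) = p (vec r s xs ys)"
    using p \<pi>(1) l unfolding S_rs_def by auto
  ultimately show ?thesis by simp
qed

lemma S2:
  assumes p: "p \<in> S_rs r s" and l: "length ys = s" and m: "mset ys' = mset ys"
  shows "p (vec r s xs ys') = p (vec r s xs ys)"
proof -
  obtain \<pi> where \<pi>: "\<pi> permutes {..<s}" "permute_list \<pi> ys = ys'"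
    using mset_eq_permutation[OF m] l by blast
  have bij: "bij_betw (\<lambda>i. i + r) {..<s} {r..<r + s}"
  proof (rule bij_betw_imageI)
    show "(\<lambda>i. i + r) ` {..<s} = {r..<r + s}"
    proof (intro equalityI subsetI)
      fix x assume "x \<in> {r..<r+s}" then show "x \<in> (\<lambda>i. i + r) ` {..<s}" by (intro image_eqI[of _ _ "x - r"]) auto
    qed auto
  qed (auto simp: inj_on_def)
  define \<sigma> where "\<sigma> = (\<lambda>x. if x \<in> {r..<r + s} then (\<lambda>i. i + r) (\<pi> (inv_into {..<s} (\<lambda>i. i + r) x)) else x)"
  have \<sigma>p: "\<sigma> permutes {r..<r + s}" unfolding \<sigma>_def by (rule permutes_bij_inv_into[OF \<pi>(1) bij])
  have inv: "inv_into {..<s} (\<lambda>i. i + r) x = x - r" if "x \<in> {r..<r + s}" for x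
  proof -
    have "x = (x - r) + r" using that by auto
    moreover have "inv_into {..<s} (\<lambda>i. i + r) ((x - r) + r) = x - r"
      using that by (intro inv_into_f_f) (auto simp: inj_on_def)
    ultimately show ?thesis by metis
  qed
  have "vec r s xs ys' = vec r s xs ys \<circ> \<sigma>"
  proof
    fix j
    show "vec r s xs ys' j = (vec r s xs ys \<circ> \<sigma>) j"
    proof (cases "j \<in> {r..<r + s}")
      case True
      then have sj: "\<sigma> j = \<pi> (j - r) + r" unfolding \<sigma>_def using inv by simp
      have "\<pi> (j - r) < s" using \<pi>(1) True by (metis atLeastLessThan_iff lessThan_iff less_diff_conv2 add.commute permutes_in_image)
      then show ?thesis using True \<pi> l sj by (auto simp: vec_def permute_list_nth)
    next
      case False
      then have "\<sigma> j = j" unfolding \<sigma>_def by (simp only: if_False)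
      then show ?thesis using False by (simp add: vec_def)
    qed
  qed
  moreover have "p (vec r s xs ys \<circ> \<sigma>) = p (vec r s xs ys)"
    using p \<sigma>p unfolding S_rs_def by auto
  ultimately show ?thesis by simp
qed

lemma S3:
  assumes p: "p \<in> S_rs r s" and r: "0 < r" and s: "0 < s"
    and l: "length xs = r - 1" "length ys = s - 1"
  shows "p (vec r s (xs @ [c]) ((- c) # ys)) = p (vec r s (xs @ [0]) (0 # ys))"
proof -
  let ?a = "vec r s (xs @ [0]) (0 # ys)"
  have a1: "vec r s (xs @ [c]) ((- c) # ys) = ?a(r - 1 := c, r := - c)"
    using r s l by (auto simp: vec_def nth_append nth_Cons' fun_eq_iff)
  have a2: "?a = ?a(r - 1 := 0, r := - 0)"
    using r s l by (auto simp: vec_def nth_append nth_Cons' fun_eq_iff)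
  have "p (?a(r - 1 := c, r := - c)) = p (?a(r - 1 := 0, r := - 0))"
    using p r s unfolding S_rs_def by blast
  then show ?thesis using a1 a2 by metis
qed

definition G :: "((nat \<Rightarrow> complex) \<Rightarrow> complex) \<Rightarrow> nat \<Rightarrow> nat \<Rightarrow> complex multiset \<Rightarrow> complex multiset \<Rightarrow> nat \<Rightarrow> complex" where
  "G p r s A B k = p (vec r s (SOME l. mset l = A + replicate_mset k 0) (SOME l. mset l = B + replicate_mset k 0))"

lemma some_mset: "mset (SOME l. mset l = M) = M"
  by (rule someI_ex) (rule ex_mset)

lemma canon:
  assumes p: "p \<in> S_rs r s"
  shows "\<forall>A B xs ys. length xs = r \<longrightarrow> length ys = s \<longrightarrow> mset xs = A + C \<longrightarrow>
     mset ys = B + image_mset uminus C \<longrightarrow> p (vec r s xs ys) = G p r s A B (size C)"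
proof (induction C)
  case empty
  show ?case
  proof (intro allI impI)
    fix A B :: "complex multiset" and xs ys assume h: "length xs = r" "length ys = s" "mset xs = A + {#}" "mset ys = B + image_mset uminus {#}"
    let ?l1 = "SOME l. mset l = A + replicate_mset 0 0" and ?l2 = "SOME l. mset l = B + replicate_mset 0 0"
    have "p (vec r s ?l1 ?l2) = p (vec r s xs ?l2)"
      by (rule S1[OF p h(1)]) (simp add: some_mset h(3))
    also have "\<dots> = p (vec r s xs ys)"
      by (rule S2[OF p h(2)]) (simp add: some_mset h(4))
    finally show "p (vec r s xs ys) = G p r s A B (size {#})" unfolding G_def by simp
  qed
next
  case (add c C)
  show ?case
  proof (intro allI impI)
    fix A B :: "complex multiset" and xs ys assume h: "length xs = r" "length ys = s" "mset xs = A + add_mset c C"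
      "mset ys = B + image_mset uminus (add_mset c C)"
    define l where "l = (SOME l. mset l = A + C)"
    define l' where "l' = (SOME l. mset l = B + image_mset uminus C)"
    have ml: "mset l = A + C" "mset l' = B + image_mset uminus C" unfolding l_def l'_def by (simp_all add: some_mset)
    have r: "0 < r" and lenl: "length l = r - 1"
      using h(1) arg_cong[OF h(3), of size] ml(1) by (auto simp: size_mset[symmetric] simp del: size_mset)
    have s: "0 < s" and lenl': "length l' = s - 1"
      using h(2) arg_cong[OF h(4), of size] ml(2) by (auto simp: size_mset[symmetric] simp del: size_mset)
    have "p (vec r s xs ys) = p (vec r s (l @ [c]) ys)"
      by (rule S1[OF p h(1), symmetric]) (simp add: ml h(3))
    also have "\<dots> = p (vec r s (l @ [c]) ((- c) # l'))"
      by (rule S2[OF p h(2), symmetric]) (simp add: ml h(4))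
    also have "\<dots> = p (vec r s (l @ [0]) (0 # l'))"
      by (rule S3[OF p r s lenl lenl'])
    also have "\<dots> = G p r s (add_mset 0 A) (add_mset 0 B) (size C)"
      using add.IH[rule_format, of "l @ [0]" "0 # l'" "add_mset 0 A" "add_mset 0 B"] r s lenl lenl' ml
      by simp
    also have "\<dots> = G p r s A B (size (add_mset c C))"
      unfolding G_def by simp
    finally show "p (vec r s xs ys) = G p r s A B (size (add_mset c C))" .
  qed
qed

lemma P1:
  assumes p: "p \<in> S_rs r s" and l: "length xs = r" "length ys = s" "length xs' = r" "length ys' = s"
    and e: "mset xs + image_mset uminus (mset ys') = mset xs' + image_mset uminus (mset ys)"
  shows "p (vec r s xs ys) = p (vec r s xs' ys')"
proof -
  have key: "p (vec r s xs ys) = G p r s (mset xs - image_mset uminus (mset ys))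
      (image_mset uminus (image_mset uminus (mset ys) - mset xs)) (r - size (mset xs - image_mset uminus (mset ys)))"
    if l: "length xs = r" "length ys = s" for xs ys
  proof -
    define X where "X = mset xs"
    define NY where "NY = image_mset uminus (mset ys)"
    have ys: "mset ys = image_mset uminus NY" unfolding NY_def by (simp add: multiset.map_comp comp_def)
    have X: "X = (X - NY) + (X \<inter># NY)" by (simp add: multiset_eq_iff min_def)
    have NY: "NY = (NY - X) + (X \<inter># NY)" by (simp add: multiset_eq_iff min_def)
    have ys2: "mset ys = image_mset uminus (NY - X) + image_mset uminus (X \<inter># NY)"
      using ys NY by (metis image_mset_union)
    have sz: "size (X \<inter># NY) = r - size (X - NY)"
      using arg_cong[OF X, of size] l unfolding X_def by simp
    show ?thesis
      using canon[OF p, rule_format, OF l, of "X - NY" "X \<inter># NY" "image_mset uminus (NY - X)"] X ys2 sz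
      unfolding X_def NY_def by simp
  qed
  have ec: "count (mset xs) a + count (image_mset uminus (mset ys')) a =
     count (mset xs') a + count (image_mset uminus (mset ys)) a" for a
    using e by (metis count_union)
  have "count (mset xs) a - count (image_mset uminus (mset ys)) a = count (mset xs') a - count (image_mset uminus (mset ys')) a" for a
    using ec[of a] by arith
  then have e1: "mset xs - image_mset uminus (mset ys) = mset xs' - image_mset uminus (mset ys')"
    by (simp add: multiset_eq_iff)
  have "count (image_mset uminus (mset ys)) a - count (mset xs) a = count (image_mset uminus (mset ys')) a - count (mset xs') a" for a
    using ec[of a] by arith
  then have e2: "image_mset uminus (mset ys) - mset xs = image_mset uminus (mset ys') - mset xs'"
    by (simp add: multiset_eq_iff)
  show ?thesis using key[OF l(1,2)] key[OF l(3,4)] e1 e2 by simp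
qed



lemma pf_sum: "finite F \<Longrightarrow> (\<And>i. i \<in> F \<Longrightarrow> f i \<in> polyfun n) \<Longrightarrow> (\<lambda>a. \<Sum>i\<in>F. f i a) \<in> polyfun n"
proof (induction F rule: finite_induct)
  case empty then show ?case by (simp add: pf_const)
next
  case (insert x F)
  have "(\<lambda>a. f x a + (\<Sum>i\<in>F. f i a)) \<in> polyfun n"
    using insert by (intro pf_add[of "f x" n "\<lambda>a. \<Sum>i\<in>F. f i a", simplified]) auto
  then show ?case using insert by simp
qed

lemma pf_prod: "finite F \<Longrightarrow> (\<And>i. i \<in> F \<Longrightarrow> f i \<in> polyfun n) \<Longrightarrow> (\<lambda>a. \<Prod>i\<in>F. f i a) \<in> polyfun n"
proof (induction F rule: finite_induct)
  case empty then show ?case by (simp add: pf_const)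
next
  case (insert x F)
  have "(\<lambda>a. f x a * (\<Prod>i\<in>F. f i a)) \<in> polyfun n"
    using insert by (intro pf_mult[of "f x" n "\<lambda>a. \<Prod>i\<in>F. f i a", simplified]) auto
  then show ?case using insert by simp
qed

lemma pf_minus: "p \<in> polyfun n \<Longrightarrow> q \<in> polyfun n \<Longrightarrow> (\<lambda>a. p a - q a) \<in> polyfun n"
proof -
  assume "p \<in> polyfun n" "q \<in> polyfun n"
  then have "(\<lambda>a. p a + (\<lambda>a. - 1) a * q a) \<in> polyfun n"
    by (intro pf_add pf_mult pf_const)
  then show ?thesis by simp
qed

definition qF :: "complex set \<Rightarrow> complex \<Rightarrow> complex" where
  "qF F z = (\<Prod>c\<in>F. z - c)"

definition Pq :: "nat \<Rightarrow> nat \<Rightarrow> complex set \<Rightarrow> (nat \<Rightarrow> complex) \<Rightarrow> complex" where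
  "Pq r s F a = (\<Sum>i<r. qF F (a i)) - (\<Sum>j\<in>{r..<r + s}. qF F (- a j))"

lemma Pq_polyfun: assumes "finite F" shows "Pq r s F \<in> polyfun (r + s)"
proof -
  have x: "(\<lambda>a. qF F (a i)) \<in> polyfun (r + s)" if "i < r + s" for i
    unfolding qF_def using assms
  proof (intro pf_prod)
    fix c
    have "(\<lambda>a. a i + (\<lambda>a. - c) a) \<in> polyfun (r + s)" using that by (intro pf_add pf_var pf_const)
    then show "(\<lambda>a. a i - c) \<in> polyfun (r + s)" by simp
  qed
  have y: "(\<lambda>a. qF F (- a i)) \<in> polyfun (r + s)" if "i < r + s" for i
    unfolding qF_def using assms
  proof (intro pf_prod)
    fix c
    have "(\<lambda>a. (\<lambda>a. - 1) a * a i + (\<lambda>a. - c) a) \<in> polyfun (r + s)" using that by (intro pf_add pf_mult pf_var pf_const)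
    then show "(\<lambda>a. - a i - c) \<in> polyfun (r + s)" by simp
  qed
  show ?thesis unfolding Pq_def
    by (intro pf_minus pf_sum x y) auto
qed

lemma Pq_S: assumes "finite F" shows "Pq r s F \<in> S_rs r s"
  unfolding S_rs_def
proof (intro CollectI conjI allI impI)
  show "Pq r s F \<in> polyfun (r + s)" by (rule Pq_polyfun[OF assms])
next
  fix \<sigma> and a :: "nat \<Rightarrow> complex" assume \<sigma>: "\<sigma> permutes {..<r}"
  have "(\<Sum>i<r. qF F ((a \<circ> \<sigma>) i)) = (\<Sum>i<r. qF F (a i))"
    using sum.permute[OF \<sigma>, of "\<lambda>i. qF F (a i)"] by (simp add: comp_def)
  moreover have "(\<Sum>j\<in>{r..<r + s}. qF F (- (a \<circ> \<sigma>) j)) = (\<Sum>j\<in>{r..<r + s}. qF F (- a j))"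
    using permutes_not_in[OF \<sigma>] by (intro sum.cong) auto
  ultimately show "Pq r s F (a \<circ> \<sigma>) = Pq r s F a" unfolding Pq_def by simp
next
  fix \<sigma> and a :: "nat \<Rightarrow> complex" assume \<sigma>: "\<sigma> permutes {r..<r + s}"
  have "(\<Sum>j\<in>{r..<r + s}. qF F (- (a \<circ> \<sigma>) j)) = (\<Sum>j\<in>{r..<r + s}. qF F (- a j))"
    using sum.permute[OF \<sigma>, of "\<lambda>i. qF F (- a i)"] by (simp add: comp_def)
  moreover have "(\<Sum>i<r. qF F ((a \<circ> \<sigma>) i)) = (\<Sum>i<r. qF F (a i))"
    using permutes_not_in[OF \<sigma>] by (intro sum.cong) auto
  ultimately show "Pq r s F (a \<circ> \<sigma>) = Pq r s F a" unfolding Pq_def by simp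
next
  fix a :: "nat \<Rightarrow> complex" and t u
  assume rs: "0 < r \<and> 0 < s"
  have gen: "Pq r s F (a(r - 1 := t, r := - t)) =
     (\<Sum>i<r - 1. qF F (a i)) - (\<Sum>j\<in>{Suc r..<r + s}. qF F (- a j))" for t
  proof -
    have r: "r = Suc (r - 1)" using rs by simp
    have "(\<Sum>i<r. qF F ((a(r - 1 := t, r := - t)) i)) = (\<Sum>i<r - 1. qF F ((a(r - 1 := t, r := - t)) i)) + qF F t"
      using sum.lessThan_Suc[of "\<lambda>i. qF F ((a(r - 1 := t, r := - t)) i)" "r - 1"] r by simp
    also have "(\<Sum>i<r - 1. qF F ((a(r - 1 := t, r := - t)) i)) = (\<Sum>i<r - 1. qF F (a i))"
      by (intro sum.cong) auto
    finally have 1: "(\<Sum>i<r. qF F ((a(r - 1 := t, r := - t)) i)) = (\<Sum>i<r - 1. qF F (a i)) + qF F t" .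
    have "(\<Sum>j\<in>{r..<r + s}. qF F (- (a(r - 1 := t, r := - t)) j)) =
        qF F t + (\<Sum>j\<in>{Suc r..<r + s}. qF F (- (a(r - 1 := t, r := - t)) j))"
      using rs by (subst sum.atLeast_Suc_lessThan) auto
    also have "(\<Sum>j\<in>{Suc r..<r + s}. qF F (- (a(r - 1 := t, r := - t)) j)) = (\<Sum>j\<in>{Suc r..<r + s}. qF F (- a j))"
      by (intro sum.cong) auto
    finally have 2: "(\<Sum>j\<in>{r..<r + s}. qF F (- (a(r - 1 := t, r := - t)) j)) = qF F t + (\<Sum>j\<in>{Suc r..<r + s}. qF F (- a j))" .
    show ?thesis unfolding Pq_def 1 2 by simp
  qed
  show "Pq r s F (a(r - 1 := t, r := - t)) = Pq r s F (a(r - 1 := u, r := - u))"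
    unfolding gen ..
qed

lemma Pq_eval: "Pq r s F a = sum_mset (image_mset (qF F) (mset (map a [0..<r])))
   - sum_mset (image_mset (qF F) (mset (map (\<lambda>j. - a j) [r..<r + s])))"
proof -
  have 1: "(\<Sum>i<r. qF F (a i)) = sum_list (map (\<lambda>i. qF F (a i)) [0..<r])"
    by (simp add: sum_set_upt_conv_sum_list_nat[symmetric] atLeast0LessThan)
  have 2: "(\<Sum>j\<in>{r..<r + s}. qF F (- a j)) = sum_list (map (\<lambda>i. qF F (- a i)) [r..<r + s])"
    by (simp add: sum_set_upt_conv_sum_list_nat[symmetric])
  have sl: "sum_mset (image_mset g (mset xs)) = sum_list (map g xs)" for g :: "complex \<Rightarrow> complex" and xs
    by (induction xs) auto
  show ?thesis unfolding Pq_def 1 2 sl by (simp add: comp_def)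
qed

lemma separate:
  fixes M1 M2 :: "complex multiset"
  assumes "\<And>F. finite F \<Longrightarrow> sum_mset (image_mset (qF F) M1) = sum_mset (image_mset (qF F) M2)"
  shows "M1 = M2"
proof (rule multiset_eqI)
  fix c0
  define F where "F = (set_mset M1 \<union> set_mset M2) - {c0}"
  have fin: "finite F" unfolding F_def by simp
  have nz: "qF F c0 \<noteq> 0" unfolding qF_def F_def by auto
  have red: "sum_mset (image_mset (qF F) M) = qF F c0 * of_nat (count M c0)"
    if "set_mset M \<subseteq> set_mset M1 \<union> set_mset M2" for M
  proof -
    have "image_mset (qF F) M = image_mset (\<lambda>x. if x = c0 then qF F c0 else 0) M"
    proof (rule image_mset_cong)
      fix x assume "x \<in># M"
      then show "qF F x = (if x = c0 then qF F c0 else 0)"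
        using that fin unfolding qF_def F_def by auto
    qed
    then show ?thesis by (simp add: sum_mset_delta)
  qed
  have "qF F c0 * of_nat (count M1 c0) = qF F c0 * of_nat (count M2 c0)"
    using assms[OF fin] red[of M1] red[of M2] by simp
  then show "count M1 c0 = count M2 c0" using nz by simp
qed



lemma Lambda_t:
  assumes "(L, R) \<in> Lambda r s"
  shows "is_partition L" "is_partition R" "psize L \<le> r" "r - psize L \<le> s" "psize R = s - (r - psize L)"
  using assms unfolding Lambda_def by auto

lemma cvec_X:
  assumes "(L, R) \<in> Lambda r s"
  shows "mset (map (cvec r s \<delta> (L, R)) [0..<r]) = CLs (young L) + replicate_mset (r - psize L) 0"
proof -
  note t = Lambda_t[OF assms]
  have "map (cvec r s \<delta> (L, R)) [0..<r] = map (\<lambda>x. of_int (content x)) (row_reading L) @ replicate (r - psize L) 0"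
  proof (rule nth_equalityI)
    show "length (map (cvec r s \<delta> (L, R)) [0..<r]) = length (map (\<lambda>x. of_int (content x)) (row_reading L) @ replicate (r - psize L) 0)"
      using t by (simp add: rr_length)
  next
    fix i assume "i < length (map (cvec r s \<delta> (L, R)) [0..<r])"
    then have i: "i < r" by simp
    show "map (cvec r s \<delta> (L, R)) [0..<r] ! i = (map (\<lambda>x. of_int (content x)) (row_reading L) @ replicate (r - psize L) 0) ! i"
      using i t by (auto simp: cvec_def Let_def nth_append rr_length cont_def)
  qed
  then show ?thesis
    using rr_distinct[OF t(1)] by (simp add: CLs_def rr_set[symmetric] mset_set_set)
qed

lemma cvec_Y:
  assumes "(L, R) \<in> Lambda r s"
  shows "mset (map (\<lambda>j. - cvec r s \<delta> (L, R) j) [r..<r + s]) = NRs \<delta> (young R) + replicate_mset (r - psize L) 0"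
proof -
  note t = Lambda_t[OF assms]
  have "map (\<lambda>j. - cvec r s \<delta> (L, R) j) [r..<r + s] = replicate (r - psize L) 0 @ map (\<lambda>x. - \<delta> - of_int (content x)) (row_reading R)"
  proof (rule nth_equalityI)
    show "length (map (\<lambda>j. - cvec r s \<delta> (L, R) j) [r..<r + s]) = length (replicate (r - psize L) 0 @ map (\<lambda>x. - \<delta> - of_int (content x)) (row_reading R))"
      using t by (simp add: rr_length)
  next
    fix i assume "i < length (map (\<lambda>j. - cvec r s \<delta> (L, R) j) [r..<r + s])"
    then have i: "i < s" by simp
    show "map (\<lambda>j. - cvec r s \<delta> (L, R) j) [r..<r + s] ! i = (replicate (r - psize L) 0 @ map (\<lambda>x. - \<delta> - of_int (content x)) (row_reading R)) ! i"
    proof (cases "i < r - psize L")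
      case True
      then show ?thesis using i t by (auto simp: cvec_def Let_def nth_append rr_length)
    next
      case False
      have e: "Suc (r + i) - r - (r - psize L) - 1 = i - (r - psize L)" using False by simp
      show ?thesis using i t False by (auto simp: cvec_def Let_def nth_append rr_length cont_def e)
    qed
  qed
  then show ?thesis
    using rr_distinct[OF t(2)] by (simp add: NRs_def rr_set[symmetric] mset_set_set)
qed

lemma cvec_vec: "cvec r s \<delta> w = vec r s (map (cvec r s \<delta> w) [0..<r]) (map (cvec r s \<delta> w) [r..<r + s])"
  by (auto simp: fun_eq_iff vec_def cvec_def Let_def)

theorem mainTheorem15:
  fixes r s :: nat and \<delta> :: complex and lamL lamR muL muR :: "nat list"
  assumes "(lamL, lamR) \<in> Lambda r s" and "(muL, muR) \<in> Lambda r s"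
  shows "balanced \<delta> (lamL, lamR) (muL, muR) \<longleftrightarrow>
    (\<forall>p \<in> S_rs r s. p (cvec r s \<delta> (lamL, lamR)) = p (cvec r s \<delta> (muL, muR)))"
proof -
  note tl = Lambda_t[OF assms(1)] and tm = Lambda_t[OF assms(2)]
  define a where "a = cvec r s \<delta> (lamL, lamR)"
  define b where "b = cvec r s \<delta> (muL, muR)"
  define X1 where "X1 = mset (map a [0..<r])"
  define X2 where "X2 = mset (map b [0..<r])"
  define Y1 where "Y1 = mset (map (\<lambda>j. - a j) [r..<r + s])"
  define Y2 where "Y2 = mset (map (\<lambda>j. - b j) [r..<r + s])"
  have Y1': "Y1 = image_mset uminus (mset (map a [r..<r + s]))" unfolding Y1_def by (simp add: multiset.map_comp comp_def)
  have Y2': "Y2 = image_mset uminus (mset (map b [r..<r + s]))" unfolding Y2_def by (simp add: multiset.map_comp comp_def)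
  have bal: "balanced \<delta> (lamL, lamR) (muL, muR) \<longleftrightarrow> X1 + Y2 = X2 + Y1"
    unfolding balanced_iff_mset[OF tl(1,2) tm(1,2)] X1_def X2_def Y1_def Y2_def a_def b_def
      cvec_X[OF assms(1)] cvec_X[OF assms(2)] cvec_Y[OF assms(1)] cvec_Y[OF assms(2)]
    by (simp add: ac_simps)
  show ?thesis
  proof
    assume "balanced \<delta> (lamL, lamR) (muL, muR)"
    then have e: "X1 + Y2 = X2 + Y1" using bal by simp
    show "\<forall>p \<in> S_rs r s. p (cvec r s \<delta> (lamL, lamR)) = p (cvec r s \<delta> (muL, muR))"
    proof
      fix p assume p: "p \<in> S_rs r s"
      have "p (vec r s (map a [0..<r]) (map a [r..<r + s])) = p (vec r s (map b [0..<r]) (map b [r..<r + s]))"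
        by (rule P1[OF p]) (use e in \<open>simp_all add: X1_def X2_def Y1' Y2'\<close>)
      then show "p (cvec r s \<delta> (lamL, lamR)) = p (cvec r s \<delta> (muL, muR))"
        unfolding a_def b_def by (metis cvec_vec)
    qed
  next
    assume h: "\<forall>p \<in> S_rs r s. p (cvec r s \<delta> (lamL, lamR)) = p (cvec r s \<delta> (muL, muR))"
    have "X1 + Y2 = X2 + Y1"
    proof (rule separate)
      fix F :: "complex set" assume F: "finite F"
      have "Pq r s F a = Pq r s F b" using h Pq_S[OF F] unfolding a_def b_def by blast
      then have "sum_mset (image_mset (qF F) X1) - sum_mset (image_mset (qF F) Y1) =
          sum_mset (image_mset (qF F) X2) - sum_mset (image_mset (qF F) Y2)"
        unfolding Pq_eval X1_def X2_def Y1_def Y2_def .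
      then show "sum_mset (image_mset (qF F) (X1 + Y2)) = sum_mset (image_mset (qF F) (X2 + Y1))"
        by (simp add: algebra_simps)
    qed
    then show "balanced \<delta> (lamL, lamR) (muL, muR)" using bal by simp
  qed
qed


end
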